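(* Let $R$ be a maximal subring of a ring $T$ such that the conductor $(R:T)$ is a prime ideal of $T$ which is not a maximal ideal of $T$. Then $R$ is integrally closed in $T$.
   Context: All rings are commutative with $1\neq0$ and subrings are unital. A maximal subring is a proper subring maximal with respect to inclusion among proper subrings. The conductor is $(R:T)=\{x\in T\mid Tx\subseteq R\}$. *)

theory Defs
  imports "HOL-Algebra.Algebra"
begin

definition maximal_subring :: "'a set \<Rightarrow> ('a, 'b) ring_scheme \<Rightarrow> bool" where
  "maximal_subring R T \<longleftrightarrow> subring R T \<and> R \<noteq> carrier T \<and>
     (\<forall>S. subring S T \<and> R \<subseteq> S \<and> S \<noteq> carrier T \<longrightarrow> S = R)"

definition conductor :: "'a set \<Rightarrow> ('a, 'b) ring_scheme \<Rightarrow> 'a set" where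
  "conductor R T = {x \<in> carrier T. \<forall>t \<in> carrier T. t \<otimes>\<^bsub>T\<^esub> x \<in> R}"

definition integral_over :: "'a set \<Rightarrow> ('a, 'b) ring_scheme \<Rightarrow> 'a \<Rightarrow> bool" where
  "integral_over R T x \<longleftrightarrow>
     (\<exists>p. polynomial\<^bsub>T\<^esub> R p \<and> p \<noteq> [] \<and> lead_coeff p = \<one>\<^bsub>T\<^esub> \<and> ring.eval T p x = \<zero>\<^bsub>T\<^esub>)"

definition integrally_closed :: "'a set \<Rightarrow> ('a, 'b) ring_scheme \<Rightarrow> bool" where
  "integrally_closed R T \<longleftrightarrow> (\<forall>x \<in> carrier T. integral_over R T x \<longrightarrow> x \<in> R)"

end

theory Submission
  imports Defs
begin

lemma (in cring) comb_mult:
  assumes A: "subring A R" and L: "L \<subseteq> carrier R" "\<zero> \<in> L" "\<forall>a\<in>L. \<forall>b\<in>L. a \<oplus> b \<in> L"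
      "\<forall>k\<in>A. \<forall>a\<in>L. k \<otimes> a \<in> L"
    and u: "u \<in> carrier R" and gs: "set gs \<subseteq> carrier R" "\<forall>g\<in>set gs. u \<otimes> g \<in> L"
  shows "set ks \<subseteq> A \<Longrightarrow> u \<otimes> combine ks gs \<in> L"
  using gs
proof (induct ks gs rule: combine.induct)
  case (1 k Ks g Us)
  have k: "k \<in> A" "k \<in> carrier R" using 1 subringE(1)[OF A] by auto
  have Ks: "set Ks \<subseteq> carrier R" using 1 subringE(1)[OF A] by auto
  have g: "g \<in> carrier R" "set Us \<subseteq> carrier R" using 1 by auto
  have c: "combine Ks Us \<in> carrier R" using Ks g combine_in_carrier by blast
  have "u \<otimes> combine (k # Ks) (g # Us) = k \<otimes> (u \<otimes> g) \<oplus> u \<otimes> combine Ks Us"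
    using k g c u by (simp, algebra)
  moreover have "k \<otimes> (u \<otimes> g) \<in> L" using L(4) k 1 by auto
  moreover have "u \<otimes> combine Ks Us \<in> L" using 1 by auto
  ultimately show ?case using L(3) by auto
qed (use L u in auto)

lemma (in cring) nak:
  assumes A: "subring A R" and c: "c \<in> A"
  shows "\<And>L. L \<subseteq> carrier R \<Longrightarrow> \<zero> \<in> L \<Longrightarrow> \<forall>a\<in>L. \<forall>b\<in>L. a \<oplus> b \<in> L \<Longrightarrow>
      \<forall>k\<in>A. \<forall>a\<in>L. k \<otimes> a \<in> L \<Longrightarrow> set gs \<subseteq> carrier R \<Longrightarrow>
      \<forall>g\<in>set gs. \<exists>l\<in>L. \<exists>ks. set ks \<subseteq> A \<and> g = l \<oplus> c \<otimes> combine ks gs \<Longrightarrow>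
      \<exists>s\<in>A. \<forall>g\<in>set gs. (\<one> \<oplus> c \<otimes> s) \<otimes> g \<in> L"
proof (induct gs)
  case Nil
  then show ?case using subringE(2)[OF A] by auto
next
  case (Cons g gs L)
  note Asub = subringE[OF A]
  have cc: "c \<in> carrier R" using c Asub(1) by auto
  have g: "g \<in> carrier R" and gs: "set gs \<subseteq> carrier R" using Cons by auto
  define L' where "L' = {l \<oplus> a \<otimes> g | l a. l \<in> L \<and> a \<in> A}"
  have L'c: "L' \<subseteq> carrier R" unfolding L'_def using Cons(2) Asub(1) g by auto
  have L'0: "\<zero> \<in> L'" unfolding L'_def
    apply (rule CollectI, rule exI[of _ \<zero>], rule exI[of _ \<zero>]) using Cons(3) Asub(2) g by auto
  have L'a: "\<forall>a\<in>L'. \<forall>b\<in>L'. a \<oplus> b \<in> L'"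
  proof (intro ballI)
    fix a b assume "a \<in> L'" "b \<in> L'"
    then obtain l1 a1 l2 a2 where h: "a = l1 \<oplus> a1 \<otimes> g" "b = l2 \<oplus> a2 \<otimes> g" "l1 \<in> L" "l2 \<in> L" "a1 \<in> A" "a2 \<in> A"
      unfolding L'_def by blast
    have "l1 \<in> carrier R" "l2 \<in> carrier R" "a1 \<in> carrier R" "a2 \<in> carrier R" using h Cons(2) Asub(1) by auto
    hence "a \<oplus> b = (l1 \<oplus> l2) \<oplus> (a1 \<oplus> a2) \<otimes> g" using g h by algebra
    moreover have "l1 \<oplus> l2 \<in> L" "a1 \<oplus> a2 \<in> A" using h Cons(4) Asub(7) by auto
    ultimately show "a \<oplus> b \<in> L'" unfolding L'_def by blast
  qed
  have L'm: "\<forall>k\<in>A. \<forall>a\<in>L'. k \<otimes> a \<in> L'"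
  proof (intro ballI)
    fix k a assume k: "k \<in> A" and "a \<in> L'"
    then obtain l1 a1 where h: "a = l1 \<oplus> a1 \<otimes> g" "l1 \<in> L" "a1 \<in> A"
      unfolding L'_def by blast
    have "l1 \<in> carrier R" "a1 \<in> carrier R" "k \<in> carrier R" using h k Cons(2) Asub(1) by auto
    hence "k \<otimes> a = (k \<otimes> l1) \<oplus> (k \<otimes> a1) \<otimes> g" using g h by algebra
    moreover have "k \<otimes> l1 \<in> L" "k \<otimes> a1 \<in> A" using h k Cons(5) Asub(6) by auto
    ultimately show "k \<otimes> a \<in> L'" unfolding L'_def by blast
  qed
  have hyp': "\<forall>g'\<in>set gs. \<exists>l\<in>L'. \<exists>ks. set ks \<subseteq> A \<and> g' = l \<oplus> c \<otimes> combine ks gs"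
  proof
    fix g' assume g': "g' \<in> set gs"
    then obtain l ks where h: "l \<in> L" "set ks \<subseteq> A" "g' = l \<oplus> c \<otimes> combine ks (g # gs)"
      using Cons(7) by auto
    have l: "l \<in> carrier R" using h Cons(2) by auto
    show "\<exists>l\<in>L'. \<exists>ks. set ks \<subseteq> A \<and> g' = l \<oplus> c \<otimes> combine ks gs"
    proof (cases ks)
      case Nil
      have "l \<oplus> \<zero> \<otimes> g \<in> L'" unfolding L'_def using h Asub(2) by blast
      moreover have "g' = (l \<oplus> \<zero> \<otimes> g) \<oplus> c \<otimes> combine [] gs" using h Nil l g cc by simp
      ultimately show ?thesis by (intro bexI[of _ "l \<oplus> \<zero> \<otimes> g"] exI[of _ "[]"]) auto
    next
      case (Cons k ks')
      have k: "k \<in> A" "k \<in> carrier R" "set ks' \<subseteq> A" using h Cons Asub(1) by auto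
      have C: "combine ks' gs \<in> carrier R" using k Asub(1) gs combine_in_carrier by (meson subset_trans)
      have "l \<oplus> (c \<otimes> k) \<otimes> g \<in> L'" unfolding L'_def using h k c Asub(6) by blast
      moreover have "g' = (l \<oplus> (c \<otimes> k) \<otimes> g) \<oplus> c \<otimes> combine ks' gs"
        using h Cons l g cc k C by (simp, algebra)
      ultimately show ?thesis using k by blast
    qed
  qed
  obtain s where s: "s \<in> A" "\<forall>g'\<in>set gs. (\<one> \<oplus> c \<otimes> s) \<otimes> g' \<in> L'"
    using Cons(1)[OF L'c L'0 L'a L'm gs hyp'] by blast
  define u where "u = \<one> \<oplus> c \<otimes> s"
  have uA: "u \<in> A" unfolding u_def using s c Asub by auto
  have uc: "u \<in> carrier R" using uA Asub(1) by auto
  have sc: "s \<in> carrier R" using s Asub(1) by auto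
  obtain l ks where h: "l \<in> L" "set ks \<subseteq> A" "g = l \<oplus> c \<otimes> combine ks (g # gs)"
    using Cons(7) by auto
  have l: "l \<in> carrier R" using h Cons(2) by auto
  show ?case
  proof (cases ks)
    case Nil
    have gL: "g \<in> L" using h Nil l cc by simp
    have "u \<otimes> g' \<in> L" if "g' \<in> set (g # gs)" for g'
    proof (cases "g' = g")
      case True thus ?thesis using gL uA Cons(5) by auto
    next
      case False
      hence "u \<otimes> g' \<in> L'" using that s u_def by auto
      then obtain l1 a1 where "u \<otimes> g' = l1 \<oplus> a1 \<otimes> g" "l1 \<in> L" "a1 \<in> A" unfolding L'_def by blast
      thus ?thesis using gL Cons(4,5) by auto
    qed
    thus ?thesis using s(1) u_def by blast
  next
    case (Cons k ks')
    have k: "k \<in> A" "k \<in> carrier R" "set ks' \<subseteq> A" using h Cons Asub(1) by auto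
    have C: "combine ks' gs \<in> carrier R" using k Asub(1) gs combine_in_carrier by (meson subset_trans)
    have "u \<otimes> combine ks' gs \<in> L'"
      using comb_mult[OF A L'c L'0 L'a L'm uc gs] s(2) u_def k(3) by auto
    then obtain l3 e3 where h3: "u \<otimes> combine ks' gs = l3 \<oplus> e3 \<otimes> g" "l3 \<in> L" "e3 \<in> A"
      unfolding L'_def by blast
    have l3: "l3 \<in> carrier R" "e3 \<in> carrier R" using h3 Cons.prems(1) Asub(1) by auto
    define t where "t = s \<ominus> k \<otimes> u \<ominus> e3"
    define v where "v = \<one> \<oplus> c \<otimes> t"
    have tA: "t \<in> A" unfolding t_def using s k uA h3 Asub by (auto simp: a_minus_def)
    have vA: "v \<in> A" unfolding v_def using tA c Asub by auto
    have tc: "t \<in> carrier R" using tA Asub(1) by auto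
    have geq: "g = l \<oplus> c \<otimes> (k \<otimes> g \<oplus> combine ks' gs)" using h Cons by simp
    have "v \<otimes> g = u \<otimes> l \<oplus> c \<otimes> l3"
    proof -
      define XX where "XX = u \<otimes> g"
      define YY where "YY = u \<otimes> combine ks' gs"
      have Xc: "XX \<in> carrier R" "YY \<in> carrier R" using XX_def YY_def uc g C by auto
      have "u \<otimes> (l \<oplus> c \<otimes> (k \<otimes> g \<oplus> combine ks' gs)) = u \<otimes> l \<oplus> c \<otimes> k \<otimes> (u \<otimes> g) \<oplus> c \<otimes> (u \<otimes> combine ks' gs)"
        using uc l cc k g C by algebra
      hence e1: "XX = u \<otimes> l \<oplus> c \<otimes> k \<otimes> XX \<oplus> c \<otimes> YY" using geq XX_def YY_def by simp
      have e2: "YY = l3 \<oplus> e3 \<otimes> g" using h3 YY_def by simp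
      have "v \<otimes> g = XX \<ominus> c \<otimes> k \<otimes> XX \<ominus> c \<otimes> e3 \<otimes> g"
        unfolding v_def t_def XX_def u_def using uc l cc k g C sc l3 by algebra
      also have "\<dots> = (u \<otimes> l \<oplus> c \<otimes> k \<otimes> XX \<oplus> c \<otimes> (l3 \<oplus> e3 \<otimes> g)) \<ominus> c \<otimes> k \<otimes> XX \<ominus> c \<otimes> e3 \<otimes> g"
        using e1 e2 by simp
      also have "\<dots> = u \<otimes> l \<oplus> c \<otimes> l3"
        using uc l cc k g C sc l3 Xc by algebra
      finally show ?thesis .
    qed
    hence vg: "v \<otimes> g \<in> L" using Cons.prems(3,4) h(1) h3(2) uA c by auto
    define s' where "s' = t \<oplus> s \<oplus> c \<otimes> t \<otimes> s"
    have s'A: "s' \<in> A" unfolding s'_def using tA s c Asub by auto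
    have s'eq: "\<one> \<oplus> c \<otimes> s' = u \<otimes> v"
      unfolding s'_def u_def v_def using tc sc cc by algebra
    have vc: "v \<in> carrier R" using vA Asub(1) by auto
    have "(\<one> \<oplus> c \<otimes> s') \<otimes> g' \<in> L" if "g' \<in> set (g # gs)" for g'
    proof (cases "g' = g")
      case True
      have "(\<one> \<oplus> c \<otimes> s') \<otimes> g' = u \<otimes> (v \<otimes> g)" using True s'eq uc vc g by (simp add: m_assoc)
      thus ?thesis using vg uA Cons.prems(4) by auto
    next
      case False
      hence g': "g' \<in> set gs" using that by auto
      hence "u \<otimes> g' \<in> L'" using s u_def by auto
      then obtain l1 a1 where h1: "u \<otimes> g' = l1 \<oplus> a1 \<otimes> g" "l1 \<in> L" "a1 \<in> A" unfolding L'_def by blast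
      have l1: "l1 \<in> carrier R" "a1 \<in> carrier R" "g' \<in> carrier R" using h1 Cons.prems(1) Asub(1) gs g' by auto
      have "(\<one> \<oplus> c \<otimes> s') \<otimes> g' = v \<otimes> (u \<otimes> g')" using s'eq uc vc l1 by (simp, algebra)
      also have "\<dots> = v \<otimes> l1 \<oplus> a1 \<otimes> (v \<otimes> g)" using h1 vc l1 g by algebra
      finally show ?thesis using Cons.prems(3,4) h1 vA vg by auto
    qed
    thus ?thesis using s'A by blast
  qed
qed


lemma (in domain) main_field:
  assumes A: "subring A R"
    and maxi: "\<And>S. subring S R \<Longrightarrow> A \<subseteq> S \<Longrightarrow> S = A \<or> S = carrier R"
    and cond: "\<And>d. d \<in> carrier R \<Longrightarrow> (\<forall>e\<in>carrier R. e \<otimes> d \<in> A) \<Longrightarrow> d = \<zero>"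
    and x: "x \<in> carrier R" "x \<notin> A"
    and p: "p \<in> carrier (A[X])" "p \<noteq> []" "lead_coeff p = \<one>" "eval p x = \<zero>"
  shows "subfield (carrier R) R"
proof -
  note Asub = subringE[OF A]
  have SE: "simple_extension A x = carrier R"
    using maxi[OF simple_extension_is_subring[OF A x(1)] simple_extension_incl[OF Asub(1) x(1)]]
      simple_extension_mem[OF A x(1)] x(2) by auto
  define n where "n = degree p"
  have gsc: "set (exp_base x n) \<subseteq> carrier R" using exp_base_closed[OF x(1)] .
  have span: "\<exists>ks. set ks \<subseteq> A \<and> t = combine ks (exp_base x n)" if t: "t \<in> carrier R" for t
  proof -
    obtain q where q: "q \<in> carrier (A[X])" "t = eval q x"
      using t SE simple_extension_as_eval_img[OF Asub(1) x(1)] by auto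
    have unit: "lead_coeff p \<in> Units (R \<lparr> carrier := A \<rparr>)"
      using p(3) monoid.Units_one_closed[OF ring.axioms(2)[OF subring_is_ring[OF A]]] by simp
    obtain q' r where qr: "polynomial A q'" "polynomial A r"
       "q = (p \<otimes>\<^bsub>A[X]\<^esub> q') \<oplus>\<^bsub>A[X]\<^esub> r" "r = [] \<or> degree r < degree p"
      using long_division_theorem[OF A, of q p] q(1) p(1,2) unit unfolding univ_poly_carrier by blast
    note hom = ring_hom_memE[OF eval_is_hom[OF A x(1)]]
    have q'c: "q' \<in> carrier (A[X])" "r \<in> carrier (A[X])" using qr univ_poly_carrier by blast+
    have "eval q x = eval p x \<otimes> eval q' x \<oplus> eval r x"
      using qr(3) hom(2,3) q'c p(1) by (metis ring.ring_simprules(5) univ_poly_is_ring[OF A])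
    hence tr: "t = eval r x" using q p(4) hom(1)[OF q'c(1)] hom(1)[OF q'c(2)] by simp
    have rA: "set r \<subseteq> A" using qr(2) polynomial_incl by blast
    hence rc: "set r \<subseteq> carrier R" using Asub(1) by auto
    have len: "length r \<le> n" using qr(4) p(2) unfolding n_def by auto
    have "combine ((replicate (n - length r) \<zero>) @ r) (exp_base x n) = combine r (drop (n - length r) (exp_base x n))"
      using combine_prepend_replicate[OF rc gsc] .
    also have "\<dots> = combine r (exp_base x (length r))" using drop_exp_base len by simp
    also have "\<dots> = eval r x" using combine_eq_eval .
    finally have "t = combine ((replicate (n - length r) \<zero>) @ r) (exp_base x n)" using tr by simp
    moreover have "set ((replicate (n - length r) \<zero>) @ r) \<subseteq> A" using rA Asub(2) by auto
    ultimately show ?thesis by blast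
  qed
  have units: "c \<in> Units (R \<lparr> carrier := A \<rparr>)" if c: "c \<in> A" "c \<noteq> \<zero>" for c
  proof -
    have cc: "c \<in> carrier R" using c Asub(1) by auto
    define S where "S = {r \<oplus> c \<otimes> t | r t. r \<in> A \<and> t \<in> carrier R}"
    have Sc: "S \<subseteq> carrier R" unfolding S_def using Asub(1) cc by auto
    have AS: "A \<subseteq> S"
    proof
      fix a assume "a \<in> A"
      hence "a = a \<oplus> c \<otimes> \<zero>" "a \<in> A" using Asub(1) cc by auto
      thus "a \<in> S" unfolding S_def by blast
    qed
    have subS: "subring S R"
    proof (rule subringI[OF Sc])
      show "\<one> \<in> S" using AS Asub(3) by auto
      fix h assume "h \<in> S"
      then obtain r t where h: "h = r \<oplus> c \<otimes> t" "r \<in> A" "t \<in> carrier R" unfolding S_def by blast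
      have "r \<in> carrier R" using h Asub(1) by auto
      hence "\<ominus> h = (\<ominus> r) \<oplus> c \<otimes> (\<ominus> t)" using h cc by algebra
      thus "\<ominus> h \<in> S" unfolding S_def using h Asub(5) by blast
    next
      fix h1 h2 assume "h1 \<in> S" "h2 \<in> S"
      then obtain r1 t1 r2 t2 where h: "h1 = r1 \<oplus> c \<otimes> t1" "r1 \<in> A" "t1 \<in> carrier R"
          "h2 = r2 \<oplus> c \<otimes> t2" "r2 \<in> A" "t2 \<in> carrier R" unfolding S_def by blast
      have rc: "r1 \<in> carrier R" "r2 \<in> carrier R" using h Asub(1) by auto
      have "h1 \<otimes> h2 = (r1 \<otimes> r2) \<oplus> c \<otimes> (r1 \<otimes> t2 \<oplus> r2 \<otimes> t1 \<oplus> c \<otimes> t1 \<otimes> t2)"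
        using h rc cc by algebra
      moreover have "r1 \<otimes> t2 \<oplus> r2 \<otimes> t1 \<oplus> c \<otimes> t1 \<otimes> t2 \<in> carrier R" using h rc cc by auto
      ultimately show "h1 \<otimes> h2 \<in> S" unfolding S_def using h Asub(6) by blast
      have "h1 \<oplus> h2 = (r1 \<oplus> r2) \<oplus> c \<otimes> (t1 \<oplus> t2)" using h rc cc by algebra
      thus "h1 \<oplus> h2 \<in> S" unfolding S_def using h Asub(7) by blast
    qed
    have "S \<noteq> A"
    proof
      assume SA: "S = A"
      have "\<forall>e\<in>carrier R. e \<otimes> c \<in> A"
      proof
        fix e assume e: "e \<in> carrier R"
        have "e \<otimes> c = \<zero> \<oplus> c \<otimes> e" using e cc by (simp add: m_comm)
        hence "e \<otimes> c \<in> S" unfolding S_def using Asub(2) e by blast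
        thus "e \<otimes> c \<in> A" using SA by simp
      qed
      thus False using cond cc c(2) by auto
    qed
    hence Sfull: "S = carrier R" using maxi[OF subS AS] by auto
    have hyp: "\<forall>g\<in>set (exp_base x n). \<exists>l\<in>A. \<exists>ks. set ks \<subseteq> A \<and> g = l \<oplus> c \<otimes> combine ks (exp_base x n)"
    proof
      fix g assume "g \<in> set (exp_base x n)"
      hence "g \<in> S" using gsc Sfull by auto
      then obtain r t where h: "g = r \<oplus> c \<otimes> t" "r \<in> A" "t \<in> carrier R" unfolding S_def by blast
      obtain ks where "set ks \<subseteq> A" "t = combine ks (exp_base x n)" using span h(3) by blast
      thus "\<exists>l\<in>A. \<exists>ks. set ks \<subseteq> A \<and> g = l \<oplus> c \<otimes> combine ks (exp_base x n)" using h by blast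
    qed
    obtain s where s: "s \<in> A" "\<forall>g\<in>set (exp_base x n). (\<one> \<oplus> c \<otimes> s) \<otimes> g \<in> A"
      using nak[OF A c(1) Asub(1) Asub(2) _ _ gsc hyp] Asub(6,7) by blast
    have sc: "s \<in> carrier R" using s Asub(1) by auto
    have uc: "\<one> \<oplus> c \<otimes> s \<in> carrier R" using sc cc by auto
    have "\<forall>e\<in>carrier R. e \<otimes> (\<one> \<oplus> c \<otimes> s) \<in> A"
    proof
      fix e assume e: "e \<in> carrier R"
      obtain ks where ks: "set ks \<subseteq> A" "e = combine ks (exp_base x n)" using span e by blast
      have "(\<one> \<oplus> c \<otimes> s) \<otimes> e \<in> A"
        using comb_mult[OF A Asub(1) Asub(2) _ _ uc gsc s(2) ks(1)] Asub(6,7) ks(2) by blast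
      thus "e \<otimes> (\<one> \<oplus> c \<otimes> s) \<in> A" using e uc m_comm by simp
    qed
    hence "\<one> \<oplus> c \<otimes> s = \<zero>" using cond uc by blast
    hence inv: "c \<otimes> (\<ominus> s) = \<one>" using cc sc
      by (metis add.inv_closed l_minus local.minus_minus minus_equality one_closed r_minus m_closed)
    have "\<ominus> s \<in> A" using s Asub(5) by auto
    moreover have "(\<ominus> s) \<otimes> c = \<one>" using inv cc sc m_comm by (metis add.inv_closed)
    ultimately show ?thesis unfolding Units_def using c(1) inv by auto
  qed
  have subf: "subfield A R"
  proof (rule subfieldI[OF subcringI'[OF A]])
    show "Units (R\<lparr>carrier := A\<rparr>) = A - {\<zero>}"
    proof
      show "A - {\<zero>} \<subseteq> Units (R\<lparr>carrier := A\<rparr>)" using units by auto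
      show "Units (R\<lparr>carrier := A\<rparr>) \<subseteq> A - {\<zero>}"
      proof
        fix u assume "u \<in> Units (R\<lparr>carrier := A\<rparr>)"
        then obtain v where "u \<in> A" "v \<in> A" "u \<otimes> v = \<one>" unfolding Units_def by auto
        moreover have "u \<noteq> \<zero>" using calculation Asub(1) one_not_zero by (metis l_null subsetD)
        ultimately show "u \<in> A - {\<zero>}" by auto
      qed
    qed
  qed
  have alg: "(algebraic over A) x"
  proof -
    have "[] \<in> carrier (A[X])" using univ_poly_zero_closed[of R A] by (simp add: univ_poly_zero)
    moreover have "eval [] x = \<zero>" by simp
    ultimately have "\<not> inj_on (\<lambda>p. eval p x) (carrier (A[X]))"
      using p unfolding inj_on_def by metis
    thus ?thesis unfolding over_def transcendental_def by simp
  qed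
  show ?thesis using simple_extension_is_subfield[OF subf x(1)] alg SE by simp
qed


lemma (in cring) transfer_main:
  assumes "maximal_subring B R"
    and "primeideal (conductor B R) R"
    and "\<not> maximalideal (conductor B R) R"
  shows "integrally_closed B R"
proof -
  define P where "P = conductor B R"
  interpret primeideal P R using assms(2) P_def by simp
  have Bsub: "subring B R" and maxB: "\<And>S. subring S R \<Longrightarrow> B \<subseteq> S \<Longrightarrow> S \<noteq> carrier R \<Longrightarrow> S = B"
    using assms(1) unfolding maximal_subring_def by auto
  note Rs = subringE[OF Bsub]
  have PR: "P \<subseteq> B"
  proof
    fix a assume "a \<in> P"
    hence "a \<in> carrier R" "\<one> \<otimes> a \<in> B" unfolding P_def conductor_def by (auto dest: bspec[of _ _ "\<one>"])
    thus "a \<in> B" by simp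
  qed
  define D where "D = R Quot P"
  define h where "h = (\<lambda>a. P +> a)"
  interpret D: domain D unfolding D_def by (rule quotient_is_domain)
  interpret H: ring_hom_ring R D h unfolding D_def h_def by (rule rcos_ring_hom_ring)
  have carrD: "carrier D = h ` carrier R"
    unfolding D_def h_def FactRing_def A_RCOSETS_def' by auto
  have heq: "h a = h b \<longleftrightarrow> a \<ominus> b \<in> P" if ab: "a \<in> carrier R" "b \<in> carrier R" for a b
  proof
    assume "h a = h b"
    hence "a \<in> P +> b" using a_rcos_self[OF ab(1)] unfolding h_def by simp
    thus "a \<ominus> b \<in> P" using a_rcos_module_minus[OF ring_axioms ab(2) ab(1)] by simp
  next
    assume "a \<ominus> b \<in> P"
    hence "a \<in> P +> b" using a_rcos_module_minus[OF ring_axioms ab(2) ab(1)] by simp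
    thus "h a = h b" unfolding h_def using a_repr_independence'[OF _ ab(2)] by simp
  qed
  have hzero: "h a = \<zero>\<^bsub>D\<^esub> \<longleftrightarrow> a \<in> P" if a: "a \<in> carrier R" for a
  proof -
    have z: "\<zero> \<in> carrier R" by simp
    have "a \<ominus> \<zero> = a" using a by algebra
    hence "h a = h \<zero> \<longleftrightarrow> a \<in> P" using heq[OF a z] by simp
    thus ?thesis using H.hom_zero by simp
  qed
  have inR: "a \<in> B" if a: "a \<in> carrier R" "r \<in> B" "h a = h r" for a r
  proof -
    have rc: "r \<in> carrier R" using a Rs(1) by auto
    have "a \<ominus> r \<in> B" using heq[OF a(1) rc] a(3) PR by auto
    hence "(a \<ominus> r) \<oplus> r \<in> B" using Rs(7) a(2) by auto
    moreover have "(a \<ominus> r) \<oplus> r = a" using a(1) rc by algebra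
    ultimately show ?thesis by simp
  qed
  show ?thesis unfolding integrally_closed_def
  proof (intro ballI impI, rule ccontr)
    fix x assume x: "x \<in> carrier R" and int: "integral_over B R x" and xR: "x \<notin> B"
    obtain p where p: "polynomial B p" "p \<noteq> []" "lead_coeff p = \<one>" "eval p x = \<zero>"
      using int unfolding integral_over_def by auto
    have pR: "set p \<subseteq> B" using p(1,2) unfolding polynomial_def by auto
    hence pc: "set p \<subseteq> carrier R" using Rs(1) by auto
    have sub1: "subring (h ` B) D" by (rule H.img_is_subring[OF Bsub])
    have maxi: "S = h ` B \<or> S = carrier D" if S: "subring S D" "h ` B \<subseteq> S" for S
    proof -
      define S' where "S' = {t \<in> carrier R. h t \<in> S}"
      note Ss = subringE[OF S(1)]
      have "subring S' R"
        unfolding S'_def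
        by (rule subringI) (auto simp: Ss)
      moreover have RS': "B \<subseteq> S'" unfolding S'_def using S(2) Rs(1) by auto
      ultimately have "S' = B \<or> S' = carrier R" using maxB by blast
      thus ?thesis
      proof
        assume "S' = B"
        hence "S \<subseteq> h ` B" using Ss(1) carrD unfolding S'_def by auto
        thus ?thesis using S(2) by auto
      next
        assume "S' = carrier R"
        hence "carrier D \<subseteq> S" using carrD unfolding S'_def by auto
        thus ?thesis using Ss(1) by auto
      qed
    qed
    have cond: "d = \<zero>\<^bsub>D\<^esub>" if d: "d \<in> carrier D" "\<forall>e\<in>carrier D. e \<otimes>\<^bsub>D\<^esub> d \<in> h ` B" for d
    proof -
      obtain t where t: "t \<in> carrier R" "d = h t" using d carrD by auto
      have "\<forall>u\<in>carrier R. u \<otimes> t \<in> B"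
      proof
        fix u assume u: "u \<in> carrier R"
        have "h (u \<otimes> t) \<in> h ` B" using d(2) u t carrD by auto
        then obtain r where r: "r \<in> B" "h (u \<otimes> t) = h r" by auto
        have "u \<otimes> t \<in> carrier R" using u t(1) by simp
        thus "u \<otimes> t \<in> B" using inR[OF _ r] by blast
      qed
      hence "t \<in> P" unfolding P_def conductor_def using t by auto
      thus ?thesis using hzero t by auto
    qed
    have hx1: "h x \<in> carrier D" using x carrD by auto
    have hx2: "h x \<notin> h ` B"
    proof
      assume "h x \<in> h ` B"
      then obtain r where "r \<in> B" "h x = h r" by auto
      thus False using inR[OF x] xR by blast
    qed
    note hx = hx1 hx2
    have pD: "map h p \<in> carrier ((h ` B)[X]\<^bsub>D\<^esub>)"
    proof -
      have "hd (map h p) = \<one>\<^bsub>D\<^esub>" using p(2,3) by (cases p) auto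
      thus ?thesis unfolding univ_poly_carrier[symmetric] polynomial_def using pR p(2) by auto
    qed
    have pD2: "map h p \<noteq> []" "lead_coeff (map h p) = \<one>\<^bsub>D\<^esub>" using p(2,3) by (cases p; auto)+
    have pD3: "D.eval (map h p) (h x) = \<zero>\<^bsub>D\<^esub>" using H.eval_hom'[OF x pc] p(4) by simp
    have "subfield (carrier D) D"
      by (rule D.main_field[OF sub1 maxi cond hx pD pD2 pD3]) auto
    hence "Units (D\<lparr>carrier := carrier D\<rparr>) = carrier D - {\<zero>\<^bsub>D\<^esub>}" by (rule subfield.subfield_Units)
    hence units: "Units D = carrier D - {\<zero>\<^bsub>D\<^esub>}" by simp
    have "maximalideal P R"
    proof (rule maximalidealI)
      show "ideal P R" by (rule is_ideal)
      show "carrier R \<noteq> P" by (rule I_notcarr)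
      fix J assume J: "ideal J R" "P \<subseteq> J" "J \<subseteq> carrier R"
      show "J = P \<or> J = carrier R"
      proof (cases "J = P")
        case True thus ?thesis by simp
      next
        case False
        then obtain a where a: "a \<in> J" "a \<notin> P" using J by auto
        have ac: "a \<in> carrier R" using a J by auto
        have "h a \<in> Units D" using units hzero ac a carrD by auto
        then obtain v where v: "v \<in> carrier D" "v \<otimes>\<^bsub>D\<^esub> h a = \<one>\<^bsub>D\<^esub>" unfolding Units_def by auto
        obtain t where t: "t \<in> carrier R" "v = h t" using v carrD by auto
        have ta: "t \<otimes> a \<in> carrier R" using t ac by simp
        have "h (t \<otimes> a) = h \<one>" using v t ac by simp
        hence "t \<otimes> a \<ominus> \<one> \<in> P" using heq[OF ta one_closed] by blast
        hence "t \<otimes> a \<ominus> \<one> \<in> J" using J(2) by blast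
        moreover have "t \<otimes> a \<in> J" using ideal.I_l_closed[OF J(1) a(1) t(1)] .
        ultimately have "t \<otimes> a \<ominus> (t \<otimes> a \<ominus> \<one>) \<in> J"
          using J(1) by (simp add: additive_subgroup.a_subgroup ideal.axioms(1) a_minus_def
              additive_subgroup.a_closed additive_subgroup.a_inv_closed)
        moreover have "t \<otimes> a \<ominus> (t \<otimes> a \<ominus> \<one>) = \<one>" using t ac by algebra
        ultimately have "J = carrier R" using ideal.one_imp_carrier[OF J(1)] by simp
        thus ?thesis by simp
      qed
    qed
    thus False using assms(3) P_def by simp
  qed
qed

theorem lemma3p1:
  fixes T :: "('a, 'b) ring_scheme" and R :: "'a set"
  assumes "cring T"
    and "\<one>\<^bsub>T\<^esub> \<noteq> \<zero>\<^bsub>T\<^esub>"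
    and "maximal_subring R T"
    and "primeideal (conductor R T) T"
    and "\<not> maximalideal (conductor R T) T"
  shows "integrally_closed R T"
  using cring.transfer_main[OF assms(1) assms(3-5)] .

end
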